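(* Let $(X,\Sigma,\mu)$ be a measure space, $n,l\ge1$, $\mathbb{F}\in\{\mathbb{R},\mathbb{C}\}$, $(X_j)_{j\in[1,l]}$ a partition of $X$ into measurable subsets, $h\in L^2(X,\mu;\mathbb{F})$, and define $W:L^2(X,\mu;\mathbb{F}^n)\to\prod_{j\in[1,l]}\mathbb{F}^n$ by $W(F)=\big(\int_{X_j}h(x)f_x\,d\mu(x)\big)_{j\in[1,l]}$. Let $D\in\prod_{j\in[1,l]}\mathbb{F}^n$ be such that $W^{-1}(\{D\})$ contains a continuous frame. Then $\mathcal{F}^{\mathbb{F}}_{(X,\mu),n}\cap W^{-1}(\{D\})$ is dense in $W^{-1}(\{D\})$ (for the norm of $L^2(X,\mu;\mathbb{F}^n)$).
   Context: A family $\Phi=(\varphi_x)_{x\in X}$ in $\mathbb{F}^n$ (with measurable coordinates) is a continuous frame indexed by $(X,\mu)$ if there are $0<A\le B$ with $A\|v\|^2\le\int_X|\langle v,\varphi_x\rangle|^2d\mu(x)\le B\|v\|^2$ for all $v\in\mathbb{F}^n$. $\mathcal{F}^{\mathbb{F}}_{(X,\mu),n}$ denotes the set of such frames, viewed as a subset of $L^2(X,\mu;\mathbb{F}^n)$ (equivalently, the elements of $L^2(X,\mu;\mathbb{F}^n)$ whose coordinate functions are linearly independent in $L^2(X,\mu;\mathbb{F})$). *)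

theory Defs
  imports "HOL-Analysis.Analysis"
begin

text \<open>Definitions are generic in the
scalar type 'f and take the conjugation map cj (id for real, cnj for complex), so
that the standard inner product on F^n is  v . w = sum_i v_i * cj (w_i).\<close>

definition fn_inner :: "('f::real_normed_field \<Rightarrow> 'f) \<Rightarrow> 'f^'n \<Rightarrow> 'f^'n \<Rightarrow> 'f" where
  "fn_inner cj v w = (\<Sum>i\<in>UNIV. v $ i * cj (w $ i))"

definition L2vec :: "'a measure \<Rightarrow> ('a \<Rightarrow> 'f::{real_normed_field,second_countable_topology}^'n) set" where
  "L2vec M = {F. (\<forall>i. (\<lambda>x. F x $ i) \<in> borel_measurable M) \<and>
                 (\<integral>\<^sup>+x. ennreal ((norm (F x))\<^sup>2) \<partial>M) < \<infinity>}"

definition L2scal :: "'a measure \<Rightarrow> ('a \<Rightarrow> 'f::{real_normed_field,second_countable_topology}) set" where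
  "L2scal M = {h. h \<in> borel_measurable M \<and> (\<integral>\<^sup>+x. ennreal ((norm (h x))\<^sup>2) \<partial>M) < \<infinity>}"

definition cont_frame :: "('f::{real_normed_field,second_countable_topology} \<Rightarrow> 'f) \<Rightarrow> 'a measure \<Rightarrow> ('a \<Rightarrow> 'f^'n) \<Rightarrow> bool" where
  "cont_frame cj M \<phi> \<longleftrightarrow> (\<forall>i. (\<lambda>x. \<phi> x $ i) \<in> borel_measurable M) \<and>
     (\<exists>A B. 0 < A \<and> A \<le> B \<and>
        (\<forall>v::'f^'n. ennreal (A * (norm v)\<^sup>2) \<le> (\<integral>\<^sup>+x. ennreal ((norm (fn_inner cj v (\<phi> x)))\<^sup>2) \<partial>M) \<and>
                   (\<integral>\<^sup>+x. ennreal ((norm (fn_inner cj v (\<phi> x)))\<^sup>2) \<partial>M) \<le> ennreal (B * (norm v)\<^sup>2)))"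

text \<open>The map W(F) = (int_{X_j} h(x) f_x dmu(x))_{j in [1,l]}, with the index set
[1,l] represented as {0..<l}; the integral is taken coordinatewise.\<close>
definition Wmap :: "'a measure \<Rightarrow> (nat \<Rightarrow> 'a set) \<Rightarrow> ('a \<Rightarrow> 'f::{real_normed_field,banach,second_countable_topology})
                    \<Rightarrow> ('a \<Rightarrow> 'f^'n) \<Rightarrow> nat \<Rightarrow> 'f^'n" where
  "Wmap M P h F j = (\<chi> i. set_lebesgue_integral M (P j) (\<lambda>x. h x * F x $ i))"

definition Wpre :: "'a measure \<Rightarrow> (nat \<Rightarrow> 'a set) \<Rightarrow> nat \<Rightarrow> ('a \<Rightarrow> 'f::{real_normed_field,banach,second_countable_topology})
                    \<Rightarrow> (nat \<Rightarrow> 'f^'n) \<Rightarrow> ('a \<Rightarrow> 'f^'n) set" where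
  "Wpre M P l h D = {F \<in> L2vec M. \<forall>j<l. Wmap M P h F j = D j}"

definition L2_dense_in :: "'a measure \<Rightarrow> ('a \<Rightarrow> 'f::real_normed_field^'n) set \<Rightarrow> ('a \<Rightarrow> 'f^'n) set \<Rightarrow> bool" where
  "L2_dense_in M S T \<longleftrightarrow> S \<subseteq> T \<and> (\<forall>F\<in>T. \<forall>\<epsilon>>0. \<exists>G\<in>S.
       (\<integral>\<^sup>+x. ennreal ((norm (F x - G x))\<^sup>2) \<partial>M) < ennreal (\<epsilon>\<^sup>2))"

end

theory Submission
  imports Defs "HOL-Computational_Algebra.Polynomial"
begin

locale cjl =
  fixes cj :: "'f::{real_normed_field,banach,second_countable_topology,heine_borel} \<Rightarrow> 'f"
  assumes cj_add: "cj (a + b) = cj a + cj b"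
   and cj_mult: "cj (a*b) = cj a * cj b"
   and cj_of_real: "cj (of_real r) = of_real r"
   and cj_norm: "norm (cj a) = norm a"
   and cj_cj: "cj (cj a) = a"
   and cj_sq: "a * cj a = of_real ((norm a)^2)"
begin

lemma cj_0[simp]: "cj 0 = 0" using cj_of_real[of 0] by simp
lemma cj_minus: "cj (- a) = - cj a" using cj_add[of a "-a"] minus_unique[of "cj a" "cj (-a)"] by simp
lemma cj_diff: "cj (a - b) = cj a - cj b" using cj_add[of a "-b"] cj_minus by simp
lemma cj_sum: "cj (sum f A) = (\<Sum>i\<in>A. cj (f i))"
  by (induction A rule: infinite_finite_induct) (auto simp: cj_add)
lemma cj_scaleR: "cj (r *\<^sub>R a) = r *\<^sub>R cj a"
  by (simp add: scaleR_conv_of_real cj_mult cj_of_real)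
lemma cj_cont: "continuous_on UNIV cj"
proof -
  have "dist (cj x) (cj y) = dist x y" for x y by (simp add: dist_norm cj_diff[symmetric] cj_norm)
  then show ?thesis by (metis continuous_on_iff)
qed
lemma cj_meas[measurable]: "f \<in> borel_measurable M \<Longrightarrow> (\<lambda>x. cj (f x)) \<in> borel_measurable M"
  by (rule borel_measurable_continuous_on[OF cj_cont])
lemma cj_continuous[continuous_intros]: "continuous_on S f \<Longrightarrow> continuous_on S (\<lambda>x. cj (f x))"
  by (rule continuous_on_compose2[OF cj_cont]) auto

end

lemma norm_sq_vec: "(norm (x::'b::real_normed_vector^'n))\<^sup>2 = (\<Sum>i\<in>UNIV. (norm (x$i))\<^sup>2)"
  unfolding norm_vec_def L2_set_def by (simp add: sum_nonneg)

definition sqi :: "'a measure \<Rightarrow> ('a \<Rightarrow> 'b::real_normed_vector) \<Rightarrow> bool" where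
  "sqi M f \<longleftrightarrow> (\<integral>\<^sup>+x. ennreal ((norm (f x))\<^sup>2) \<partial>M) < \<infinity>"

lemma sqi_add:
  assumes "sqi M f" "sqi M g"
   and [measurable]: "(\<lambda>x. norm (f x)) \<in> borel_measurable M" "(\<lambda>x. norm (g x)) \<in> borel_measurable M"
  shows "sqi M (\<lambda>x. f x + g x)"
proof -
  have "(\<integral>\<^sup>+x. ennreal ((norm (f x + g x))\<^sup>2) \<partial>M) \<le> (\<integral>\<^sup>+x. ennreal (2 * (norm (f x))\<^sup>2) + ennreal (2 * (norm (g x))\<^sup>2) \<partial>M)"
  proof (rule nn_integral_mono)
    fix x
    have "(norm (f x + g x))\<^sup>2 \<le> (norm (f x) + norm (g x))\<^sup>2"
      by (simp add: norm_triangle_ineq power_mono)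
    also have "\<dots> \<le> 2 * (norm (f x))\<^sup>2 + 2 * (norm (g x))\<^sup>2"
      using zero_le_power2[of "norm (f x) - norm (g x)"] unfolding power2_sum power2_diff by linarith
    finally show "ennreal ((norm (f x + g x))\<^sup>2) \<le> ennreal (2 * (norm (f x))\<^sup>2) + ennreal (2 * (norm (g x))\<^sup>2)"
      by (simp add: ennreal_plus[symmetric] del: ennreal_plus)
  qed
  also have "\<dots> = (\<integral>\<^sup>+x. ennreal (2 * (norm (f x))\<^sup>2) \<partial>M) + (\<integral>\<^sup>+x. ennreal (2 * (norm (g x))\<^sup>2) \<partial>M)"
    by (rule nn_integral_add) auto
  also have "\<dots> = 2 * (\<integral>\<^sup>+x. ennreal ((norm (f x))\<^sup>2) \<partial>M) + 2 * (\<integral>\<^sup>+x. ennreal ((norm (g x))\<^sup>2) \<partial>M)"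
    by (simp add: ennreal_mult nn_integral_cmult)
  also have "\<dots> < \<infinity>" using assms(1,2) unfolding sqi_def
    by (simp add: ennreal_mult_less_top less_top)
  finally show ?thesis unfolding sqi_def .
qed

lemma sqi_scale:
  assumes "sqi M f" "(\<lambda>x. norm (f x)) \<in> borel_measurable M"
  shows "sqi M (\<lambda>x. c *\<^sub>R f x)"
proof -
  have "(\<integral>\<^sup>+x. ennreal ((norm (c *\<^sub>R f x))\<^sup>2) \<partial>M) = (\<integral>\<^sup>+x. ennreal (c\<^sup>2) * ennreal ((norm (f x))\<^sup>2) \<partial>M)"
    by (simp add: power_mult_distrib ennreal_mult)
  also have "\<dots> = ennreal (c\<^sup>2) * (\<integral>\<^sup>+x. ennreal ((norm (f x))\<^sup>2) \<partial>M)"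
    using assms(2) by (intro nn_integral_cmult) auto
  also have "\<dots> < \<infinity>" using assms(1) unfolding sqi_def by (simp add: ennreal_mult_less_top less_top)
  finally show ?thesis unfolding sqi_def .
qed

lemma sqi_prod_integrable:
  fixes f g :: "'a \<Rightarrow> 'f::{real_normed_field,banach,second_countable_topology}"
  assumes "sqi M f" "sqi M g" and [measurable]: "f \<in> borel_measurable M" "g \<in> borel_measurable M"
  shows "integrable M (\<lambda>x. f x * g x)"
proof (rule integrableI_bounded)
  show "(\<lambda>x. f x * g x) \<in> borel_measurable M" by measurable
  have "(\<integral>\<^sup>+x. ennreal (norm (f x * g x)) \<partial>M) \<le> (\<integral>\<^sup>+x. ennreal ((norm (f x))\<^sup>2) + ennreal ((norm (g x))\<^sup>2) \<partial>M)"
  proof (rule nn_integral_mono)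
    fix x
    have "norm (f x * g x) \<le> (norm (f x))\<^sup>2 + (norm (g x))\<^sup>2"
      using zero_le_power2[of "norm (f x) - norm (g x)"] zero_le_power2[of "norm (f x)"] zero_le_power2[of "norm (g x)"]
      unfolding power2_diff norm_mult by linarith
    then show "ennreal (norm (f x * g x)) \<le> ennreal ((norm (f x))\<^sup>2) + ennreal ((norm (g x))\<^sup>2)"
      by (simp add: ennreal_plus[symmetric] del: ennreal_plus)
  qed
  also have "\<dots> = (\<integral>\<^sup>+x. ennreal ((norm (f x))\<^sup>2) \<partial>M) + (\<integral>\<^sup>+x. ennreal ((norm (g x))\<^sup>2) \<partial>M)"
    by (rule nn_integral_add) auto
  also have "\<dots> < \<infinity>" using assms(1,2) unfolding sqi_def by simp
  finally show "(\<integral>\<^sup>+x. ennreal (norm (f x * g x)) \<partial>M) < \<infinity>" .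
qed

lemma L2vec_meas_norm[measurable]:
  assumes "F \<in> L2vec M" shows "(\<lambda>x. norm (F x)) \<in> borel_measurable M"
proof -
  have [measurable]: "(\<lambda>x. F x $ i) \<in> borel_measurable M" for i using assms by (simp add: L2vec_def)
  have "(\<lambda>x. sqrt ((norm (F x))\<^sup>2)) \<in> borel_measurable M" unfolding norm_sq_vec by measurable
  then show ?thesis by simp
qed

lemma L2vec_sqi: "F \<in> L2vec M \<Longrightarrow> sqi M F" by (simp add: L2vec_def sqi_def)

lemma L2vec_coord_sqi:
  assumes "F \<in> L2vec M" shows "sqi M (\<lambda>x. F x $ i)"
proof -
  have "(\<integral>\<^sup>+x. ennreal ((norm (F x $ i))\<^sup>2) \<partial>M) \<le> (\<integral>\<^sup>+x. ennreal ((norm (F x))\<^sup>2) \<partial>M)"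
    by (intro nn_integral_mono ennreal_leI power_mono) (auto intro: Finite_Cartesian_Product.norm_nth_le)
  then show ?thesis using assms unfolding sqi_def L2vec_def by auto
qed

lemma L2vec_coord_meas[measurable]: "F \<in> L2vec M \<Longrightarrow> (\<lambda>x. F x $ i) \<in> borel_measurable M"
  by (simp add: L2vec_def)

lemma L2vec_add: "F \<in> L2vec M \<Longrightarrow> G \<in> L2vec M \<Longrightarrow> (\<lambda>x. F x + G x) \<in> L2vec M"
  using sqi_add[of M F G] L2vec_sqi[of F M] L2vec_sqi[of G M] L2vec_meas_norm[of F M] L2vec_meas_norm[of G M]
  unfolding L2vec_def sqi_def by (auto intro: borel_measurable_add)

lemma L2vec_scale: "F \<in> L2vec M \<Longrightarrow> (\<lambda>x. c *\<^sub>R F x) \<in> L2vec M"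
  using sqi_scale[of M F c] L2vec_sqi[of F M] L2vec_meas_norm[of F M]
  unfolding L2vec_def sqi_def by (auto intro: borel_measurable_scaleR)

lemma L2vec_diff: assumes "F \<in> L2vec M" "G \<in> L2vec M" shows "(\<lambda>x. F x - G x) \<in> L2vec M"
  using L2vec_add[OF assms(1) L2vec_scale[OF assms(2), of "-1"]] by simp

definition qf :: "('f::{real_normed_field,banach,second_countable_topology} \<Rightarrow> 'f) \<Rightarrow> 'a measure \<Rightarrow> ('a \<Rightarrow> 'f^'n) \<Rightarrow> 'f^'n \<Rightarrow> real" where
  "qf cj M G v = (LINT x|M. (norm (fn_inner cj v (G x)))\<^sup>2)"

definition gram :: "('f::{real_normed_field,banach,second_countable_topology} \<Rightarrow> 'f) \<Rightarrow> 'a measure \<Rightarrow> ('a \<Rightarrow> 'f^'n) \<Rightarrow> ('a \<Rightarrow> 'f^'n) \<Rightarrow> 'f^'n^'n" where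
  "gram cj M U V = (\<chi> i j. LINT x|M. cj (U x $ i) * V x $ j)"

context cjl begin

lemma ip_bound: "norm (fn_inner cj v w) \<le> real CARD('n) * norm (v::'f^'n) * norm w"
proof -
  have "norm (fn_inner cj v w) \<le> (\<Sum>i\<in>UNIV. norm (v $ i * cj (w $ i)))"
    unfolding fn_inner_def by (rule norm_sum)
  also have "\<dots> \<le> (\<Sum>i\<in>(UNIV::'n set). norm v * norm w)"
    by (intro sum_mono) (auto simp: norm_mult cj_norm intro!: mult_mono Finite_Cartesian_Product.norm_nth_le)
  finally show ?thesis by simp
qed

lemma ip_meas[measurable]: "G \<in> L2vec M \<Longrightarrow> (\<lambda>x. fn_inner cj v (G x)) \<in> borel_measurable M"
  unfolding fn_inner_def by measurable

lemma ip_sqi: assumes "G \<in> L2vec M" shows "sqi M (\<lambda>x. fn_inner cj (v::'f^'n) (G x))"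
proof -
  let ?C = "real CARD('n) * norm v"
  have "(\<integral>\<^sup>+x. ennreal ((norm (fn_inner cj v (G x)))\<^sup>2) \<partial>M) \<le> (\<integral>\<^sup>+x. ennreal (?C\<^sup>2) * ennreal ((norm (G x))\<^sup>2) \<partial>M)"
  proof (rule nn_integral_mono)
    fix x
    have "(norm (fn_inner cj v (G x)))\<^sup>2 \<le> (?C * norm (G x))\<^sup>2"
      using ip_bound[of v "G x"] by (intro power_mono) auto
    then show "ennreal ((norm (fn_inner cj v (G x)))\<^sup>2) \<le> ennreal (?C\<^sup>2) * ennreal ((norm (G x))\<^sup>2)"
      by (simp add: ennreal_mult[symmetric] power_mult_distrib del: ennreal_mult)
  qed
  also have "\<dots> = ennreal (?C\<^sup>2) * (\<integral>\<^sup>+x. ennreal ((norm (G x))\<^sup>2) \<partial>M)"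
    using assms by (intro nn_integral_cmult) auto
  also have "\<dots> < \<infinity>" using assms unfolding L2vec_def by (simp add: ennreal_mult_less_top less_top)
  finally show ?thesis unfolding sqi_def .
qed

lemma sqi_cj: "sqi M f \<Longrightarrow> sqi M (\<lambda>x. cj (f x))" by (simp add: sqi_def cj_norm)

lemma gram_int: "U \<in> L2vec M \<Longrightarrow> V \<in> L2vec M \<Longrightarrow> integrable M (\<lambda>x. cj (U x $ i) * V x $ j)"
  by (intro sqi_prod_integrable sqi_cj L2vec_coord_sqi) auto

lemma ipG_int: "G \<in> L2vec M \<Longrightarrow> integrable M (\<lambda>x. fn_inner cj v (G x) * G x $ j)"
  by (intro sqi_prod_integrable ip_sqi L2vec_coord_sqi) auto

lemma ipip_int: "G \<in> L2vec M \<Longrightarrow> integrable M (\<lambda>x. fn_inner cj v (G x) * cj (fn_inner cj v (G x)))"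
  by (intro sqi_prod_integrable ip_sqi sqi_cj) auto

lemma gram_row:
  assumes "G \<in> L2vec M"
  shows "(LINT x|M. fn_inner cj v (G x) * G x $ j) = (v v* gram cj M G G) $ j"
proof -
  have "(LINT x|M. fn_inner cj v (G x) * G x $ j) = (LINT x|M. (\<Sum>i\<in>UNIV. v $ i * (cj (G x $ i) * G x $ j)))"
    unfolding fn_inner_def by (simp add: sum_distrib_right mult.assoc)
  also have "\<dots> = (\<Sum>i\<in>UNIV. LINT x|M. v $ i * (cj (G x $ i) * G x $ j))"
    using assms by (intro Bochner_Integration.integral_sum[where f="\<lambda>i x. v $ i * (cj (G x $ i) * G x $ j)"] integrable_mult_right gram_int) auto
  also have "\<dots> = (\<Sum>i\<in>UNIV. v $ i * (LINT x|M. cj (G x $ i) * G x $ j))"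
    by (simp add: integral_mult_right_zero)
  finally show ?thesis by (simp add: vector_matrix_mult_def gram_def)
qed

lemma cj_ip: "cj (fn_inner cj v w) = (\<Sum>j\<in>UNIV. cj (v $ j) * w $ j)"
  unfolding fn_inner_def by (simp add: cj_sum cj_mult cj_cj)

lemma qf_int: assumes "G \<in> L2vec M" shows "integrable M (\<lambda>x. (norm (fn_inner cj v (G x)))\<^sup>2)"
proof -
  have "integrable M (\<lambda>x. norm (fn_inner cj v (G x) * cj (fn_inner cj v (G x))))"
    using ipip_int[OF assms] by (rule integrable_norm)
  then show ?thesis by (simp add: norm_mult cj_norm power2_eq_square)
qed

lemma qf_formula:
  assumes "G \<in> L2vec M"
  shows "of_real (qf cj M G v) = (\<Sum>j\<in>UNIV. cj (v $ j) * (v v* gram cj M G G) $ j)"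
proof -
  have "of_real (qf cj M G v) = (LINT x|M. (of_real ((norm (fn_inner cj v (G x)))\<^sup>2) :: 'f))"
    unfolding qf_def by (rule integral_bounded_linear[OF bounded_linear_of_real qf_int[OF assms], symmetric])
  also have "\<dots> = (LINT x|M. fn_inner cj v (G x) * cj (fn_inner cj v (G x)))"
    by (simp add: cj_sq)
  also have "\<dots> = (LINT x|M. (\<Sum>j\<in>UNIV. cj (v $ j) * (fn_inner cj v (G x) * G x $ j)))"
    unfolding cj_ip by (simp add: sum_distrib_left mult.assoc mult.left_commute)
  also have "\<dots> = (\<Sum>j\<in>UNIV. LINT x|M. cj (v $ j) * (fn_inner cj v (G x) * G x $ j))"
    using assms by (intro Bochner_Integration.integral_sum[where f="\<lambda>j x. cj (v $ j) * (fn_inner cj v (G x) * G x $ j)"] integrable_mult_right ipG_int) auto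
  also have "\<dots> = (\<Sum>j\<in>UNIV. cj (v $ j) * (v v* gram cj M G G) $ j)"
    using assms by (simp add: integral_mult_right_zero gram_row)
  finally show ?thesis .
qed

lemma qf_nonneg: "qf cj M G v \<ge> 0" unfolding qf_def by (rule integral_nonneg_AE) auto

lemma qf_nn: assumes "G \<in> L2vec M"
  shows "(\<integral>\<^sup>+x. ennreal ((norm (fn_inner cj v (G x)))\<^sup>2) \<partial>M) = ennreal (qf cj M G v)"
  unfolding qf_def using assms by (intro nn_integral_eq_integral qf_int) auto

end

lemma det_nz_vmul:
  fixes A :: "'a::field^'n^'n"
  assumes "det A \<noteq> 0" "v v* A = 0" shows "v = 0"
proof -
  have "det (transpose A) \<noteq> 0" using assms by simp
  then have "invertible (transpose A)" by (simp add: invertible_det_nz)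
  then have "\<exists>B::'a^'n^'n. B ** transpose A = mat 1" unfolding invertible_left_inverse .
  then have "\<forall>x. transpose A *v x = 0 \<longrightarrow> x = 0" by (rule iffD1[OF matrix_left_invertible_ker])
  then show ?thesis using assms(2) by simp
qed

lemma det_zero_vmul:
  fixes A :: "'a::field^'n^'n"
  assumes "det A = 0" shows "\<exists>v. v \<noteq> 0 \<and> v v* A = 0"
proof (rule ccontr)
  assume nv: "\<not> ?thesis"
  have "\<forall>x. transpose A *v x = 0 \<longrightarrow> x = 0"
  proof (intro allI impI)
    fix x assume "transpose A *v x = 0"
    then have "x v* A = 0" by simp
    then show "x = 0" using nv by blast
  qed
  then have "\<exists>B::'a^'n^'n. B ** transpose A = mat 1" by (rule iffD2[OF matrix_left_invertible_ker])
  then have "invertible (transpose A)" unfolding invertible_left_inverse .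
  then have "det (transpose A) \<noteq> 0" by (simp add: invertible_det_nz)
  then show False using assms by simp
qed

context cjl begin

lemma qf_pos:
  assumes G: "G \<in> L2vec M" and d: "det (gram cj M G G) \<noteq> 0" and v: "v \<noteq> 0"
  shows "qf cj M G v > 0"
proof (rule ccontr)
  assume "\<not> ?thesis"
  then have "qf cj M G v = 0" using qf_nonneg[of M G v] by linarith
  then have "AE x in M. (norm (fn_inner cj v (G x)))\<^sup>2 = 0"
    unfolding qf_def using qf_int[OF G] by (subst (asm) integral_nonneg_eq_0_iff_AE) auto
  then have ae: "AE x in M. fn_inner cj v (G x) * G x $ j = 0" for j by eventually_elim simp
  have "(v v* gram cj M G G) $ j = 0" for j
    unfolding gram_row[OF G, symmetric] by (rule integral_eq_zero_AE[OF ae])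
  then have "v v* gram cj M G G = 0" by (simp add: vec_eq_iff)
  then show False using det_nz_vmul[OF d] v by blast
qed

lemma frame_det:
  assumes G: "G \<in> L2vec M" and fr: "cont_frame cj M G"
  shows "det (gram cj M G G) \<noteq> 0"
proof
  assume "det (gram cj M G G) = 0"
  then obtain v where v: "v \<noteq> 0" "v v* gram cj M G G = 0" using det_zero_vmul by blast
  have "(of_real (qf cj M G v) :: 'f) = 0" unfolding qf_formula[OF G] v(2) by simp
  then have q0: "qf cj M G v = 0" by simp
  obtain A where A: "A > 0" "ennreal (A * (norm v)\<^sup>2) \<le> (\<integral>\<^sup>+x. ennreal ((norm (fn_inner cj v (G x)))\<^sup>2) \<partial>M)"
    using fr unfolding cont_frame_def by blast
  then have "ennreal (A * (norm v)\<^sup>2) \<le> 0" unfolding qf_nn[OF G] q0 by simp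
  moreover have "A * (norm v)\<^sup>2 > 0" using A v by simp
  ultimately show False using A(1) v(1) by auto
qed

lemma ip_scale: "fn_inner cj (c *\<^sub>R u) w = c *\<^sub>R fn_inner cj u w"
  unfolding fn_inner_def by (simp add: scaleR_sum_right)

lemma qf_scale: "qf cj M G (c *\<^sub>R u) = c\<^sup>2 * qf cj M G u"
  unfolding qf_def ip_scale by (simp add: power_mult_distrib)

lemma qf_zero: "qf cj M G 0 = 0"
  unfolding qf_def fn_inner_def by simp

lemma qf_cont: assumes G: "G \<in> L2vec M" shows "continuous_on UNIV (qf cj M G)"
proof -
  have "qf cj M G v = norm (\<Sum>j\<in>UNIV. cj (v $ j) * (v v* gram cj M G G) $ j)" for v
    unfolding qf_formula[OF G, symmetric] using qf_nonneg[of M G v] by simp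
  then have e: "qf cj M G = (\<lambda>v. norm (\<Sum>j\<in>UNIV. cj (v $ j) * (\<Sum>i\<in>UNIV. v $ i * gram cj M G G $ i $ j)))"
    by (auto simp: vector_matrix_mult_def)
  show ?thesis unfolding e by (intro continuous_intros)
qed

lemma frame_of_pos:
  assumes G: "G \<in> L2vec M" and pos: "\<forall>v. v \<noteq> 0 \<longrightarrow> qf cj M G v > 0"
  shows "cont_frame cj M (G :: 'a \<Rightarrow> 'f^'n)"
proof -
  let ?S = "sphere (0::'f^'n) 1"
  obtain k :: 'n where True by blast
  have "(norm (axis k (1::'f)))\<^sup>2 = 1\<^sup>2"
    unfolding norm_sq_vec by (simp add: axis_def if_distrib[of "\<lambda>z. (norm z)\<^sup>2"] cong: if_cong)
  then have "norm (axis k (1::'f)) = 1" using power2_eq_iff_nonneg[of "norm (axis k (1::'f))" 1] by simp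
  then have ax: "axis k (1::'f) \<in> ?S" by simp
  then have ne: "?S \<noteq> {}" by blast
  have cS: "continuous_on ?S (qf cj M G)" using qf_cont[OF G] by (rule continuous_on_subset) auto
  obtain a where a: "a \<in> ?S" "\<forall>y\<in>?S. qf cj M G a \<le> qf cj M G y"
    using continuous_attains_inf[OF compact_sphere ne cS] by blast
  obtain b where b: "b \<in> ?S" "\<forall>y\<in>?S. qf cj M G y \<le> qf cj M G b"
    using continuous_attains_sup[OF compact_sphere ne cS] by blast
  define A where "A = qf cj M G a"
  define B where "B = qf cj M G b"
  have A0: "A > 0" unfolding A_def using a(1) pos by (intro pos[rule_format]) auto
  have AB: "A \<le> B" unfolding A_def B_def using a b by auto
  have bnd: "A * (norm v)\<^sup>2 \<le> qf cj M G v \<and> qf cj M G v \<le> B * (norm v)\<^sup>2" for v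
  proof (cases "v = 0")
    case True then show ?thesis by (simp add: qf_zero)
  next
    case False
    define u where "u = (1 / norm v) *\<^sub>R v"
    have u: "u \<in> ?S" using False by (simp add: u_def)
    have "v = norm v *\<^sub>R u" using False by (simp add: u_def)
    then have "qf cj M G v = (norm v)\<^sup>2 * qf cj M G u" by (metis qf_scale)
    moreover have "A \<le> qf cj M G u" "qf cj M G u \<le> B" using a b u unfolding A_def B_def by auto
    then have "A * (norm v)\<^sup>2 \<le> qf cj M G u * (norm v)\<^sup>2" "qf cj M G u * (norm v)\<^sup>2 \<le> B * (norm v)\<^sup>2"
      by (auto intro: mult_right_mono)
    ultimately show ?thesis by (simp add: mult.commute)
  qed
  have ineq: "\<forall>v. ennreal (A * (norm v)\<^sup>2) \<le> (\<integral>\<^sup>+x. ennreal ((norm (fn_inner cj v (G x)))\<^sup>2) \<partial>M) \<and>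
      (\<integral>\<^sup>+x. ennreal ((norm (fn_inner cj v (G x)))\<^sup>2) \<partial>M) \<le> ennreal (B * (norm v)\<^sup>2)"
    unfolding qf_nn[OF G] using bnd by (auto intro: ennreal_leI)
  have meas: "\<forall>i. (\<lambda>x. G x $ i) \<in> borel_measurable M" using G by simp
  show ?thesis unfolding cont_frame_def using meas A0 AB ineq by blast
qed

end

lemma poly_det: "poly (det (Pm :: 'a::comm_ring_1 poly^'n^'n)) x = det (\<chi> i j. poly (Pm$i$j) x)"
  unfolding det_def by (simp add: poly_sum poly_prod)

context cjl begin

lemma gram_lin:
  assumes F: "F \<in> L2vec M" and E: "E \<in> L2vec M"
  shows "gram cj M (\<lambda>x. F x + t *\<^sub>R E x) (\<lambda>x. F x + t *\<^sub>R E x) $ i $ j =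
     gram cj M F F $ i $ j + t *\<^sub>R (gram cj M F E $ i $ j + gram cj M E F $ i $ j) + t\<^sup>2 *\<^sub>R gram cj M E E $ i $ j"
proof -
  define a where "a = (\<lambda>x. cj (F x $ i) * F x $ j)"
  define b where "b = (\<lambda>x. cj (F x $ i) * E x $ j)"
  define c where "c = (\<lambda>x. cj (E x $ i) * F x $ j)"
  define d where "d = (\<lambda>x. cj (E x $ i) * E x $ j)"
  have ia: "integrable M a" and ib: "integrable M b" and ic: "integrable M c" and id: "integrable M d"
    unfolding a_def b_def c_def d_def using F E by (auto intro!: gram_int)
  have pt: "cj ((F x + t *\<^sub>R E x) $ i) * (F x + t *\<^sub>R E x) $ j = a x + t *\<^sub>R (b x + c x) + t\<^sup>2 *\<^sub>R d x" for x
  proof -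
    have "cj ((F x + t *\<^sub>R E x) $ i) * (F x + t *\<^sub>R E x) $ j = (cj (F x $ i) + of_real t * cj (E x $ i)) * (F x $ j + of_real t * E x $ j)"
      by (simp only: vector_add_component vector_scaleR_component cj_add cj_scaleR) (simp only: scaleR_conv_of_real)
    also have "\<dots> = a x + t *\<^sub>R (b x + c x) + t\<^sup>2 *\<^sub>R d x"
      unfolding a_def b_def c_def d_def scaleR_conv_of_real of_real_power
      by (simp add: distrib_left distrib_right power2_eq_square mult.assoc mult.left_commute)
    finally show ?thesis .
  qed
  have "gram cj M (\<lambda>x. F x + t *\<^sub>R E x) (\<lambda>x. F x + t *\<^sub>R E x) $ i $ j =
     (LINT x|M. a x + t *\<^sub>R (b x + c x) + t\<^sup>2 *\<^sub>R d x)"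
    unfolding gram_def vec_lambda_beta pt by (rule refl)
  also have "\<dots> = (LINT x|M. a x + t *\<^sub>R (b x + c x)) + (LINT x|M. t\<^sup>2 *\<^sub>R d x)"
    using ia ib ic id by (intro Bochner_Integration.integral_add) auto
  also have "\<dots> = (LINT x|M. a x) + (LINT x|M. t *\<^sub>R (b x + c x)) + t\<^sup>2 *\<^sub>R (LINT x|M. d x)"
    using ia ib ic by (subst Bochner_Integration.integral_add) auto
  also have "\<dots> = (LINT x|M. a x) + t *\<^sub>R ((LINT x|M. b x) + (LINT x|M. c x)) + t\<^sup>2 *\<^sub>R (LINT x|M. d x)"
    using ib ic by (simp add: Bochner_Integration.integral_add)
  finally show ?thesis unfolding gram_def vec_lambda_beta a_def b_def c_def d_def .
qed

lemma W_lin: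
  assumes Pj: "P j \<in> sets M" and h: "h \<in> L2scal M" and F: "F \<in> L2vec M" and Phi: "Phi \<in> L2vec M"
  shows "Wmap M P h (\<lambda>x. F x + t *\<^sub>R (Phi x - F x)) j = Wmap M P h F j + t *\<^sub>R (Wmap M P h Phi j - Wmap M P h F j)"
proof -
  have hm[measurable]: "h \<in> borel_measurable M" and hs: "sqi M h" using h by (auto simp: L2scal_def sqi_def)
  have iF: "integrable M (\<lambda>x. indicator (P j) x *\<^sub>R (h x * F x $ i))" for i
    using Pj F hs by (intro integrable_mult_indicator sqi_prod_integrable L2vec_coord_sqi) auto
  have iP: "integrable M (\<lambda>x. indicator (P j) x *\<^sub>R (h x * Phi x $ i))" for i
    using Pj Phi hs by (intro integrable_mult_indicator sqi_prod_integrable L2vec_coord_sqi) auto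
  show ?thesis unfolding vec_eq_iff
  proof
    fix i
    define A where "A = (\<lambda>x. indicator (P j) x *\<^sub>R (h x * F x $ i))"
    define B where "B = (\<lambda>x. indicator (P j) x *\<^sub>R (h x * Phi x $ i))"
    have e: "(\<lambda>x. indicator (P j) x *\<^sub>R (h x * (F x + t *\<^sub>R (Phi x - F x)) $ i)) = (\<lambda>x. A x + t *\<^sub>R (B x - A x))"
      unfolding A_def B_def by (rule ext) (simp only: vector_add_component vector_scaleR_component vector_minus_component distrib_left mult_scaleR_right right_diff_distrib scaleR_add_right scaleR_diff_right scaleR_left_commute)
    have "has_bochner_integral M (\<lambda>x. A x + t *\<^sub>R (B x - A x)) (integral\<^sup>L M A + t *\<^sub>R (integral\<^sup>L M B - integral\<^sup>L M A))"
    proof -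
      have iA: "integrable M A" and iB: "integrable M B" unfolding A_def B_def by (rule iF, rule iP)
      show ?thesis
        by (rule has_bochner_integral_add[OF has_bochner_integral_integrable[OF iA] has_bochner_integral_scaleR_right[OF has_bochner_integral_diff[OF has_bochner_integral_integrable[OF iB] has_bochner_integral_integrable[OF iA]]]])
    qed
    then have "(LINT x|M. indicator (P j) x *\<^sub>R (h x * (F x + t *\<^sub>R (Phi x - F x)) $ i)) =
      integral\<^sup>L M A + t *\<^sub>R (integral\<^sup>L M B - integral\<^sup>L M A)"
      unfolding e by (rule has_bochner_integral_integral_eq)
    then show "Wmap M P h (\<lambda>x. F x + t *\<^sub>R (Phi x - F x)) j $ i = (Wmap M P h F j + t *\<^sub>R (Wmap M P h Phi j - Wmap M P h F j)) $ i"
      unfolding Wmap_def set_lebesgue_integral_def vector_add_component vector_scaleR_component vector_minus_component vec_lambda_beta A_def B_def .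
  qed
qed

end

context cjl begin

lemma poly3: "poly [:a, b, c:] (of_real t) = a + t *\<^sub>R b + t\<^sup>2 *\<^sub>R c"
  by (simp add: scaleR_conv_of_real power2_eq_square algebra_simps)

lemma main:
  fixes F Phi :: "'a \<Rightarrow> 'f^'n"
  assumes Pm: "\<forall>j<l. P j \<in> sets M" and h: "h \<in> L2scal M"
    and Phi: "Phi \<in> Wpre M P l h D" "cont_frame cj M Phi"
    and F: "F \<in> Wpre M P l h D" and eps: "\<epsilon> > 0"
  shows "\<exists>G\<in>{\<Phi>. cont_frame cj M \<Phi>} \<inter> Wpre M P l h D. (\<integral>\<^sup>+x. ennreal ((norm (F x - G x))\<^sup>2) \<partial>M) < ennreal (\<epsilon>\<^sup>2)"
proof -
  have FL: "F \<in> L2vec M" and PL: "Phi \<in> L2vec M" using F Phi by (auto simp: Wpre_def)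
  define E where "E = (\<lambda>x. Phi x - F x)"
  have EL: "E \<in> L2vec M" unfolding E_def by (rule L2vec_diff[OF PL FL])
  define Gt where "Gt = (\<lambda>(t::real) x. F x + t *\<^sub>R E x)"
  have GL: "Gt t \<in> L2vec M" for t unfolding Gt_def by (intro L2vec_add FL L2vec_scale EL)
  have GW: "Gt t \<in> Wpre M P l h D" for t
  proof -
    have "Wmap M P h (Gt t) j = D j" if "j < l" for j
    proof -
      have "Wmap M P h (Gt t) j = Wmap M P h F j + t *\<^sub>R (Wmap M P h Phi j - Wmap M P h F j)"
        unfolding Gt_def E_def using Pm that by (intro W_lin h FL PL) auto
      also have "\<dots> = D j" using F Phi(1) that by (simp add: Wpre_def)
      finally show ?thesis .
    qed
    then show ?thesis using GL[of t] by (simp add: Wpre_def)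
  qed
  define Pmat where "Pmat = ((\<chi> i j. [: gram cj M F F $ i $ j, gram cj M F E $ i $ j + gram cj M E F $ i $ j, gram cj M E E $ i $ j :]) :: 'f poly^'n^'n)"
  have detG: "det (gram cj M (Gt t) (Gt t)) = poly (det Pmat) (of_real t)" for t
  proof -
    have "gram cj M (Gt t) (Gt t) = (\<chi> i j. poly (Pmat $ i $ j) (of_real t))"
      unfolding Gt_def Pmat_def by (simp only: vec_eq_iff vec_lambda_beta gram_lin[OF FL EL] poly3) simp
    then show ?thesis by (simp add: poly_det)
  qed
  have G1: "Gt 1 = Phi" unfolding Gt_def E_def by auto
  have "det (gram cj M (Gt 1) (Gt 1)) \<noteq> 0" using frame_det[OF PL Phi(2)] G1 by simp
  then have pnz: "det Pmat \<noteq> 0" using detG[of 1] by auto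
  have "finite (of_real -` {x. poly (det Pmat) x = 0})"
    by (rule finite_vimageI[OF poly_roots_finite[OF pnz] inj_of_real])
  moreover have "of_real -` {x. poly (det Pmat) x = 0} = {t::real. poly (det Pmat) (of_real t) = 0}" by auto
  ultimately have fin: "finite {t::real. poly (det Pmat) (of_real t) = 0}" by simp
  obtain k where k: "(\<integral>\<^sup>+x. ennreal ((norm (E x))\<^sup>2) \<partial>M) = ennreal k" "0 \<le> k"
    using EL unfolding L2vec_def by (cases "(\<integral>\<^sup>+x. ennreal ((norm (E x))\<^sup>2) \<partial>M)" rule: ennreal_cases) auto
  define \<delta> where "\<delta> = \<epsilon> / (k + 1)"
  have d0: "\<delta> > 0" unfolding \<delta>_def using eps k by simp
  have "\<not> {0<..<\<delta>} \<subseteq> {t::real. poly (det Pmat) (of_real t) = 0}"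
    using fin d0 infinite_Ioo[of 0 \<delta>] finite_subset by blast
  then obtain t where "t \<in> {0<..<\<delta>}" "t \<notin> {t::real. poly (det Pmat) (of_real t) = 0}" by blast
  then have t: "0 < t" "t < \<delta>" "poly (det Pmat) (of_real t) \<noteq> 0" by auto
  have dG: "det (gram cj M (Gt t) (Gt t)) \<noteq> 0" using detG t by simp
  have frame: "cont_frame cj M (Gt t)"
    using frame_of_pos[OF GL] qf_pos[OF GL dG] by blast
  have dist: "(\<integral>\<^sup>+x. ennreal ((norm (F x - Gt t x))\<^sup>2) \<partial>M) = ennreal (t\<^sup>2 * k)"
  proof -
    have "(\<integral>\<^sup>+x. ennreal ((norm (F x - Gt t x))\<^sup>2) \<partial>M) = (\<integral>\<^sup>+x. ennreal (t\<^sup>2) * ennreal ((norm (E x))\<^sup>2) \<partial>M)"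
      unfolding Gt_def by (simp add: power_mult_distrib ennreal_mult)
    also have "\<dots> = ennreal (t\<^sup>2) * (\<integral>\<^sup>+x. ennreal ((norm (E x))\<^sup>2) \<partial>M)"
      using L2vec_meas_norm[OF EL] by (intro nn_integral_cmult) auto
    finally show ?thesis using k by (simp add: ennreal_mult)
  qed
  have "t * (k + 1) < \<epsilon>" using t(2) k(2) unfolding \<delta>_def by (simp add: pos_less_divide_eq)
  have "t\<^sup>2 * k \<le> t\<^sup>2 * (k + 1)" by (simp add: mult_left_mono)
  also have "\<dots> \<le> t\<^sup>2 * (k + 1)\<^sup>2" using k(2) by (intro mult_left_mono) (auto simp: power2_eq_square)
  also have "\<dots> = (t * (k + 1))\<^sup>2" by (simp add: power_mult_distrib)
  also have "\<dots> < \<epsilon>\<^sup>2" using \<open>t * (k + 1) < \<epsilon>\<close> t(1) k(2) by (intro power_strict_mono) auto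
  finally have "t\<^sup>2 * k < \<epsilon>\<^sup>2" .
  then have "ennreal (t\<^sup>2 * k) < ennreal (\<epsilon>\<^sup>2)" using eps by (intro ennreal_lessI) auto
  then have lt: "(\<integral>\<^sup>+x. ennreal ((norm (F x - Gt t x))\<^sup>2) \<partial>M) < ennreal (\<epsilon>\<^sup>2)" unfolding dist .
  have mem: "Gt t \<in> {\<Phi>. cont_frame cj M \<Phi>} \<inter> Wpre M P l h D" using frame GW[of t] by simp
  show ?thesis by (rule bexI[OF _ mem]) (rule lt)
qed

end

interpretation R: cjl "id :: real \<Rightarrow> real"
  by unfold_locales (auto simp: power2_eq_square)

interpretation C: cjl "cnj"
  by unfold_locales (auto simp: complex_norm_square simp del: of_real_power)

theorem corollary6p3:
  fixes M :: "'a measure" and P :: "nat \<Rightarrow> 'a set" and l :: nat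
  assumes "l \<ge> 1"
    and "\<forall>j<l. P j \<in> sets M"
    and "\<forall>j<l. \<forall>k<l. j \<noteq> k \<longrightarrow> P j \<inter> P k = {}"
    and "(\<Union>j<l. P j) = space M"
  shows "(\<forall>(h::'a \<Rightarrow> real) (D::nat \<Rightarrow> real^'n).
            h \<in> L2scal M \<and> (\<exists>\<Phi>\<in>Wpre M P l h D. cont_frame id M \<Phi>) \<longrightarrow>
            L2_dense_in M ({\<Phi>. cont_frame id M \<Phi>} \<inter> Wpre M P l h D) (Wpre M P l h D))
       \<and> (\<forall>(h::'a \<Rightarrow> complex) (D::nat \<Rightarrow> complex^'n).
            h \<in> L2scal M \<and> (\<exists>\<Phi>\<in>Wpre M P l h D. cont_frame cnj M \<Phi>) \<longrightarrow>
            L2_dense_in M ({\<Phi>. cont_frame cnj M \<Phi>} \<inter> Wpre M P l h D) (Wpre M P l h D))"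
proof (intro conjI allI impI)
  fix h :: "'a \<Rightarrow> real" and D :: "nat \<Rightarrow> real^'n"
  assume a: "h \<in> L2scal M \<and> (\<exists>\<Phi>\<in>Wpre M P l h D. cont_frame id M \<Phi>)"
  then obtain Phi where Phi: "Phi \<in> Wpre M P l h D" "cont_frame id M Phi" by blast
  show "L2_dense_in M ({\<Phi>. cont_frame id M \<Phi>} \<inter> Wpre M P l h D) (Wpre M P l h D)"
    unfolding L2_dense_in_def using R.main[OF assms(2) conjunct1[OF a] Phi] by blast
next
  fix h :: "'a \<Rightarrow> complex" and D :: "nat \<Rightarrow> complex^'n"
  assume a: "h \<in> L2scal M \<and> (\<exists>\<Phi>\<in>Wpre M P l h D. cont_frame cnj M \<Phi>)"
  then obtain Phi where Phi: "Phi \<in> Wpre M P l h D" "cont_frame cnj M Phi" by blast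
  show "L2_dense_in M ({\<Phi>. cont_frame cnj M \<Phi>} \<inter> Wpre M P l h D) (Wpre M P l h D)"
    unfolding L2_dense_in_def using C.main[OF assms(2) conjunct1[OF a] Phi] by blast
qed

end
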